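(* Let $\mathbf{h}=(h_1,\dots,h_p)\subset\mathbb{Z}[X_1,\dots,X_n]$ satisfy assumption $\mathsf{G}$, $V=V(\mathbf{h})$, and let $\delta$ be an upper bound on the cardinality of $W(\pi_1,V)$. Consider the linear forms $u^{(i)}=L_1+iL_2+\cdots+i^{p-1}L_p$ for $i\in\{1,\dots,8(p-1)\delta\}$. Then at least $7/8$ of these linear forms have coefficient vector $\mathbf{u}=(1,i,\dots,i^{p-1})$ satisfying $u_1\ell_{\mathbf{x},1}+\cdots+u_p\ell_{\mathbf{x},p}\ne0$ for every $\mathbf{x}\in W(\pi_1,V)$, where $\boldsymbol{\ell}_{\mathbf{x}}=[\ell_{\mathbf{x},1},\dots,\ell_{\mathbf{x},p}]$ is a nonzero vector in the left nullspace of $\mathrm{jac}_{\mathbf{x}}(\mathbf{h},1)$.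
   Context: $\pi_1(x_1,\dots,x_n)=x_1$; $V(\mathbf{h})\subset\mathbb{C}^n$ the zero-set. $\mathrm{jac}(\mathbf{h})$ is the Jacobian matrix; $\mathrm{jac}(\mathbf{h},1)=(\partial h_i/\partial X_j)_{1\le i\le p,\,2\le j\le n}$. $W(\pi_1,V)$ is the set of points $\mathbf{x}\in V$, not in the singular locus of $V$, with $\pi_1(T_{\mathbf{x}}V)=\{0\}$. For a $(p-1)$-minor $m$ of $\mathrm{jac}(\mathbf{h},1)$, $\mathsf{Minors}(\mathbf{h},m)$ is the vector of $p$-minors obtained by adding the missing row and a missing column to $m$, $\mathcal{O}(m)=\{m\ne0\}$. Assumption $\mathsf{G}$: (1) $\mathrm{jac}(\mathbf{h})$ has rank $p$ on $V$; (2) $\mathrm{jac}(\mathbf{h},1)$ has rank $p-1$ on $W(\pi_1,V)$ (so $\boldsymbol{\ell}_{\mathbf{x}}$ is unique up to scalar); (3) $W(\pi_1,V)$ is finite; (4) for each $(p-1)$-minor $m$, $\mathbf{h},\mathsf{Minors}(\mathbf{h},m)$ define $W(\pi_1,V)$ in $\mathcal{O}(m)$ with Jacobian of rank $n$ on $W(\pi_1,V)\cap\mathcal{O}(m)$. *)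

theory Defs
  imports "HOL-Analysis.Analysis"
begin

text \<open>Points of complex affine n-space are encoded as functions
  x :: nat => complex that vanish outside the index range {..<n}; coordinate X_(j+1)
  of the paper is index j, so pi_1 is evaluation at index 0. Polynomials are
  represented by their polynomial functions.\<close>

definition cspace :: "nat \<Rightarrow> (nat \<Rightarrow> complex) set" where
  "cspace n = {x. \<forall>j\<ge>n. x j = 0}"

inductive poly_fun :: "nat \<Rightarrow> complex set \<Rightarrow> ((nat \<Rightarrow> complex) \<Rightarrow> complex) \<Rightarrow> bool"
  for n :: nat and K :: "complex set" where
  pf_const: "c \<in> K \<Longrightarrow> poly_fun n K (\<lambda>x. c)"
| pf_var: "j < n \<Longrightarrow> poly_fun n K (\<lambda>x. x j)"
| pf_add: "poly_fun n K f \<Longrightarrow> poly_fun n K g \<Longrightarrow> poly_fun n K (\<lambda>x. f x + g x)"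
| pf_mult: "poly_fun n K f \<Longrightarrow> poly_fun n K g \<Longrightarrow> poly_fun n K (\<lambda>x. f x * g x)"

definition pdiff :: "((nat \<Rightarrow> complex) \<Rightarrow> complex) \<Rightarrow> nat \<Rightarrow> (nat \<Rightarrow> complex) \<Rightarrow> complex" where
  "pdiff f j x = deriv (\<lambda>t. f (x(j := t))) (x j)"

definition lin_indep_fam :: "nat \<Rightarrow> 'i set \<Rightarrow> ('i \<Rightarrow> nat \<Rightarrow> complex) \<Rightarrow> bool" where
  "lin_indep_fam m I r \<longleftrightarrow>
     (\<forall>c. (\<forall>j<m. (\<Sum>i\<in>I. c i * r i j) = 0) \<longrightarrow> (\<forall>i\<in>I. c i = 0))"

definition mat_rank :: "nat \<Rightarrow> nat \<Rightarrow> (nat \<Rightarrow> nat \<Rightarrow> complex) \<Rightarrow> nat" where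
  "mat_rank p m A = Max {card I | I. I \<subseteq> {..<p} \<and> lin_indep_fam m I A}"

definition cdim :: "nat \<Rightarrow> (nat \<Rightarrow> complex) set \<Rightarrow> nat" where
  "cdim n S = Max {card B | B. finite B \<and> B \<subseteq> S \<and> lin_indep_fam n B (\<lambda>b. b)}"

definition zero_set :: "nat \<Rightarrow> nat \<Rightarrow> (nat \<Rightarrow> (nat \<Rightarrow> complex) \<Rightarrow> complex) \<Rightarrow> (nat \<Rightarrow> complex) set" where
  "zero_set n p h = {x \<in> cspace n. \<forall>i<p. h i x = 0}"

definition jac :: "(nat \<Rightarrow> (nat \<Rightarrow> complex) \<Rightarrow> complex) \<Rightarrow> (nat \<Rightarrow> complex) \<Rightarrow> nat \<Rightarrow> nat \<Rightarrow> complex" where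
  "jac h x i j = pdiff (h i) j x"

text \<open>jac(h,1): drop the first column (index 0); column k of jac1 is column k+1 of jac.\<close>
definition jac1 :: "(nat \<Rightarrow> (nat \<Rightarrow> complex) \<Rightarrow> complex) \<Rightarrow> (nat \<Rightarrow> complex) \<Rightarrow> nat \<Rightarrow> nat \<Rightarrow> complex" where
  "jac1 h x i k = pdiff (h i) (Suc k) x"

definition van_ideal :: "nat \<Rightarrow> (nat \<Rightarrow> complex) set \<Rightarrow> ((nat \<Rightarrow> complex) \<Rightarrow> complex) set" where
  "van_ideal n V = {g. poly_fun n UNIV g \<and> (\<forall>y\<in>V. g y = 0)}"

definition tangent_space :: "nat \<Rightarrow> (nat \<Rightarrow> complex) set \<Rightarrow> (nat \<Rightarrow> complex) \<Rightarrow> (nat \<Rightarrow> complex) set" where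
  "tangent_space n V x = {v \<in> cspace n. \<forall>g\<in>van_ideal n V. (\<Sum>j<n. pdiff g j x * v j) = 0}"

text \<open>Non-singular (regular) points of V: x in V whose tangent space dimension does
  not exceed that at all nearby points of V (equivalently, dim T_x V = local dimension).\<close>
definition regular_pt :: "nat \<Rightarrow> (nat \<Rightarrow> complex) set \<Rightarrow> (nat \<Rightarrow> complex) \<Rightarrow> bool" where
  "regular_pt n V x \<longleftrightarrow> x \<in> V \<and>
     (\<exists>e>0. \<forall>y\<in>V. (\<forall>j<n. cmod (y j - x j) < e) \<longrightarrow>
        cdim n (tangent_space n V x) \<le> cdim n (tangent_space n V y))"

definition crit_W :: "nat \<Rightarrow> (nat \<Rightarrow> complex) set \<Rightarrow> (nat \<Rightarrow> complex) set" where
  "crit_W n V = {x. regular_pt n V x \<and> (\<forall>v\<in>tangent_space n V x. v 0 = 0)}"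

text \<open>Determinant of the submatrix of A with rows R and columns C (both listed in
  increasing order; card R = card C).\<close>
definition subdet :: "(nat \<Rightarrow> nat \<Rightarrow> complex) \<Rightarrow> nat set \<Rightarrow> nat set \<Rightarrow> complex" where
  "subdet A R C =
     (let k = card R; rl = sorted_list_of_set R; cl = sorted_list_of_set C in
      \<Sum>\<sigma> | \<sigma> permutes {..<k}. of_int (sign \<sigma>) * (\<Prod>a<k. A (rl ! a) (cl ! (\<sigma> a))))"

definition left_null_nz :: "nat \<Rightarrow> nat \<Rightarrow> (nat \<Rightarrow> (nat \<Rightarrow> complex) \<Rightarrow> complex) \<Rightarrow> (nat \<Rightarrow> complex) \<Rightarrow> (nat \<Rightarrow> complex) \<Rightarrow> bool" where
  "left_null_nz n p h x l \<longleftrightarrow> (\<exists>i<p. l i \<noteq> 0) \<and>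
     (\<forall>k<n - 1. (\<Sum>i<p. l i * jac1 h x i k) = 0)"

text \<open>A (p-1)-minor m of jac(h,1) is given by a row set R and a column
  set C of jac(h,1). Minors(h,m) consists of the p-minors with all rows and
  columns C plus one further column c not in C; these are listed as the functions
  F k for p <= k < p + q, after h_1..h_p (F k = h k for k < p).\<close>
definition assumption_G :: "nat \<Rightarrow> nat \<Rightarrow> (nat \<Rightarrow> (nat \<Rightarrow> complex) \<Rightarrow> complex) \<Rightarrow> bool" where
  "assumption_G n p h \<longleftrightarrow>
    (let V = zero_set n p h; W = crit_W n V in
     (\<forall>x\<in>V. mat_rank p n (jac h x) = p) \<and>
     (\<forall>x\<in>W. mat_rank p (n - 1) (jac1 h x) = p - 1) \<and>
     finite W \<and>
     (\<forall>R C. R \<subseteq> {..<p} \<and> card R = p - 1 \<and> C \<subseteq> {..<n - 1} \<and> card C = p - 1 \<longrightarrow>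
        (let Om = {x \<in> cspace n. subdet (jac1 h x) R C \<noteq> 0};
             cs = sorted_list_of_set ({..<n - 1} - C);
             q = length cs;
             F = (\<lambda>k x. if k < p then h k x
                        else subdet (jac1 h x) {..<p} (insert (cs ! (k - p)) C))
         in {x \<in> Om. \<forall>k < p + q. F k x = 0} = W \<inter> Om \<and>
            (\<forall>x \<in> W \<inter> Om. mat_rank (p + q) n (jac F x) = n))))"

end

theory Submission
  imports Defs "HOL-Computational_Algebra.Polynomial"
begin

lemma roots_bound:
  fixes l :: "nat \<Rightarrow> complex"
  assumes "j0 < p" "l j0 \<noteq> 0"
  shows "finite {i::nat. (\<Sum>j<p. of_nat i ^ j * l j) = 0} \<and>
         card {i::nat. (\<Sum>j<p. of_nat i ^ j * l j) = 0} \<le> p - 1"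
proof -
  define P where "P = (\<Sum>j<p. monom (l j) j)"
  have ev: "poly P z = (\<Sum>j<p. z ^ j * l j)" for z
    unfolding P_def poly_sum poly_monom by (simp add: mult.commute)
  have "coeff P j0 = l j0"
    unfolding P_def coeff_sum coeff_monom using assms(1) by simp
  hence P0: "P \<noteq> 0" using assms(2) by auto
  have deg: "degree P \<le> p - 1"
    unfolding P_def by (rule degree_sum_le) (auto intro: order.trans[OF degree_monom_le])
  define S where "S = {i::nat. (\<Sum>j<p. of_nat i ^ j * l j) = 0}"
  have sub: "of_nat ` S \<subseteq> {z. poly P z = 0}" unfolding S_def ev by auto
  have fin: "finite {z. poly P z = 0}" using poly_roots_finite[OF P0] .
  have inj: "inj_on (of_nat :: nat \<Rightarrow> complex) S" by (auto simp: inj_on_def)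
  have fS: "finite S" using finite_subset[OF sub fin] inj finite_imageD by blast
  have "card S = card (of_nat ` S :: complex set)" using card_image[OF inj] by simp
  also have "\<dots> \<le> card {z. poly P z = 0}" using card_mono[OF fin sub] .
  also have "\<dots> \<le> degree P" using card_poly_roots_bound[OF P0] .
  finally show ?thesis using fS deg unfolding S_def by simp
qed

lemma proportional:
  fixes A :: "nat \<Rightarrow> nat \<Rightarrow> complex"
  assumes rk: "mat_rank p m A = p - 1" and p1: "p \<ge> 1"
    and l: "(\<exists>i<p. l i \<noteq> 0)" "\<forall>k<m. (\<Sum>i<p. l i * A i k) = 0"
    and l': "\<forall>k<m. (\<Sum>i<p. l' i * A i k) = 0"
  shows "\<exists>c. \<forall>j<p. l' j = c * l j"
proof -
  define S where "S = {card I | I. I \<subseteq> {..<p} \<and> lin_indep_fam m I A}"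
  have finS: "finite S" unfolding S_def
    by (rule finite_subset[of _ "card ` Pow {..<p}"]) auto
  have "0 \<in> S" unfolding S_def lin_indep_fam_def by (auto intro!: exI[of _ "{}"])
  hence "Max S \<in> S" using finS Max_in by blast
  then obtain I where I: "I \<subseteq> {..<p}" "lin_indep_fam m I A" "card I = p - 1"
    using rk unfolding S_def mat_rank_def by auto
  have "card ({..<p} - I) = 1" using I p1 by (simp add: card_Diff_subset finite_subset)
  then obtain i0 where i0: "{..<p} - I = {i0}" using card_1_singletonE by blast
  have i0p: "i0 < p" "i0 \<notin> I" using i0 by auto
  have Ieq: "{..<p} = insert i0 I" using i0 I by auto
  have finI: "finite I" using I finite_subset by blast
  have key: "\<forall>j<p. v j = 0" if v: "\<forall>k<m. (\<Sum>i<p. v i * A i k) = 0" "v i0 = 0" for v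
  proof -
    have "\<forall>k<m. (\<Sum>i\<in>I. v i * A i k) = 0"
    proof (intro allI impI)
      fix k assume "k < m"
      have "(\<Sum>i<p. v i * A i k) = v i0 * A i0 k + (\<Sum>i\<in>I. v i * A i k)"
        unfolding Ieq using finI i0p by simp
      thus "(\<Sum>i\<in>I. v i * A i k) = 0" using v \<open>k < m\<close> by simp
    qed
    hence "\<forall>i\<in>I. v i = 0" using I(2) unfolding lin_indep_fam_def by blast
    thus ?thesis using v(2) Ieq by auto
  qed
  have li0: "l i0 \<noteq> 0"
  proof
    assume "l i0 = 0"
    hence "\<forall>j<p. l j = 0" using key l(2) by blast
    thus False using l(1) by auto
  qed
  define c where "c = l' i0 / l i0"
  define v where "v = (\<lambda>j. l' j - c * l j)"
  have "\<forall>k<m. (\<Sum>i<p. v i * A i k) = 0"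
  proof (intro allI impI)
    fix k assume "k < m"
    have "(\<Sum>i<p. v i * A i k) = (\<Sum>i<p. l' i * A i k) - c * (\<Sum>i<p. l i * A i k)"
      unfolding v_def by (simp add: algebra_simps sum_subtractf sum_distrib_left)
    thus "(\<Sum>i<p. v i * A i k) = 0" using l(2) l' \<open>k < m\<close> by simp
  qed
  moreover have "v i0 = 0" unfolding v_def c_def using li0 by simp
  ultimately have "\<forall>j<p. v j = 0" using key by blast
  thus ?thesis unfolding v_def by auto
qed

theorem proposition5p4:
  fixes n p :: nat and h :: "nat \<Rightarrow> (nat \<Rightarrow> complex) \<Rightarrow> complex" and \<delta> :: nat
  assumes hpoly: "\<forall>i<p. poly_fun n \<int> (h i)"
    and G: "assumption_G n p h"
    and bound: "card (crit_W n (zero_set n p h)) \<le> \<delta>"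
  shows "7 * (8 * (p - 1) * \<delta>) \<le>
    8 * card {i \<in> {1..8 * (p - 1) * \<delta>}.
      \<forall>x \<in> crit_W n (zero_set n p h). \<forall>l. left_null_nz n p h x l \<longrightarrow>
        (\<Sum>j<p. of_nat i ^ j * l j) \<noteq> 0}"
proof (cases "p \<ge> 1")
  case False
  thus ?thesis by simp
next
  case p1: True
  define W where "W = crit_W n (zero_set n p h)"
  define N where "N = 8 * (p - 1) * \<delta>"
  have finW: "finite W" and rkW: "\<forall>x\<in>W. mat_rank p (n - 1) (jac1 h x) = p - 1"
    using G unfolding assumption_G_def Let_def W_def by auto
  define badx where "badx x = {i::nat. \<exists>l. left_null_nz n p h x l \<and> (\<Sum>j<p. of_nat i ^ j * l j) = 0}" for x
  have bx: "finite (badx x) \<and> card (badx x) \<le> p - 1" if xW: "x \<in> W" for x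
  proof (cases "\<exists>l0. left_null_nz n p h x l0")
    case False
    hence "badx x = {}" unfolding badx_def by auto
    thus ?thesis by simp
  next
    case True
    then obtain l0 where l0: "left_null_nz n p h x l0" by blast
    then obtain j0 where j0: "j0 < p" "l0 j0 \<noteq> 0" unfolding left_null_nz_def by auto
    have "badx x \<subseteq> {i::nat. (\<Sum>j<p. of_nat i ^ j * l0 j) = 0}"
    proof
      fix i assume "i \<in> badx x"
      then obtain l where l: "left_null_nz n p h x l" "(\<Sum>j<p. of_nat i ^ j * l j) = 0"
        unfolding badx_def by auto
      obtain c where c: "\<forall>j<p. l j = c * l0 j"
        using proportional[OF rkW[rule_format, OF xW] p1, of l0 l] l0 l(1)
        unfolding left_null_nz_def by blast
      have "c \<noteq> 0" using c l(1) unfolding left_null_nz_def by auto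
      have "(\<Sum>j<p. of_nat i ^ j * l j) = c * (\<Sum>j<p. of_nat i ^ j * l0 j)"
        using c by (simp add: sum_distrib_left algebra_simps)
      thus "i \<in> {i::nat. (\<Sum>j<p. of_nat i ^ j * l0 j) = 0}" using l(2) \<open>c \<noteq> 0\<close> by simp
    qed
    thus ?thesis using roots_bound[of j0 p l0, OF j0] card_mono finite_subset by (meson order.trans)
  qed
  define Good where "Good = {i \<in> {1..N}. \<forall>x \<in> W. \<forall>l. left_null_nz n p h x l \<longrightarrow>
        (\<Sum>j<p. of_nat i ^ j * l j) \<noteq> 0}"
  have "{1..N} - Good \<subseteq> (\<Union>x\<in>W. badx x)" unfolding Good_def badx_def by auto
  hence "card ({1..N} - Good) \<le> card (\<Union>x\<in>W. badx x)"
    using bx finW by (intro card_mono) auto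
  also have "\<dots> \<le> (\<Sum>x\<in>W. card (badx x))" using card_UN_le[OF finW] .
  also have "\<dots> \<le> (\<Sum>x\<in>W. p - 1)" using bx by (intro sum_mono) auto
  also have "\<dots> = card W * (p - 1)" by simp
  also have "\<dots> \<le> \<delta> * (p - 1)" using bound W_def by simp
  finally have b: "card ({1..N} - Good) \<le> \<delta> * (p - 1)" .
  have "card ({1..N} - Good) = card {1..N} - card Good"
    by (rule card_Diff_subset) (auto simp: Good_def intro: finite_subset)
  hence "card ({1..N} - Good) = N - card Good" by simp
  hence "N - card Good \<le> \<delta> * (p - 1)" using b by simp
  hence "7 * N \<le> 8 * card Good" unfolding N_def by (simp add: algebra_simps)
  thus ?thesis unfolding N_def Good_def W_def .
qed

end
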